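(* Let $\lambda>0$ and let $H_3=\mathbb{R}^3$ with coordinates $(x,y,z)$ carry the Lorentzian metric $g_1=-\frac{1}{\lambda^2}dx^2+dy^2+(x\,dy+dz)^2$, with Levi-Civita connection $\nabla$. Let $e_1=\partial_z$, $e_2=\partial_y-x\partial_z$, $e_3=\lambda\partial_x$, and let $V_2=\partial_y\,(=xe_1+e_2)$. Then every $V_2$-magnetic curve $\gamma(t)=(x(t),y(t),z(t))$, i.e. every smooth curve with $\nabla_{\gamma'}\gamma'=V_2\wedge\gamma'$, satisfies the system $y''+x'(z'+xy')=-\frac{xx'}{\lambda}$, $(\lambda y'-1)(z'+xy')=-xy'-\frac{x''}{\lambda}$, $(z'+xy')'=\frac{x'}{\lambda}$.
   Context: $(e_1,e_2,e_3)$ is a $g_1$-orthonormal frame with $e_3$ timelike. For $X=\sum X^ie_i$, $Y=\sum Y^ie_i$ the vector product is defined in this frame by $X\wedge Y=(X^2Y^3-X^3Y^2)e_1+(X^3Y^1-X^1Y^3)e_2+(X^2Y^1-X^1Y^2)e_3$. Primes denote derivatives in $t$. *)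

theory Defs
  imports "HOL-Analysis.Analysis"
begin

text \<open>Points of H_3 = R^3 are vectors p :: real^3 with coordinates
  x = p$1, y = p$2, z = p$3.  Tangent vectors are given by their components
  with respect to the coordinate frame (d/dx, d/dy, d/dz).\<close>

text \<open>Coefficient matrix of g_1 = -(1/lambda^2) dx^2 + dy^2 + (x dy + dz)^2.\<close>
definition gmat :: "real \<Rightarrow> real^3 \<Rightarrow> real^3^3" where
  "gmat lam p = (\<chi> i j.
      if i = 1 \<and> j = 1 then - 1 / lam^2
      else if i = 2 \<and> j = 2 then 1 + (p$1)^2
      else if (i = 2 \<and> j = 3) \<or> (i = 3 \<and> j = 2) then p$1
      else if i = 3 \<and> j = 3 then 1
      else 0)"

definition dgmat :: "real \<Rightarrow> 3 \<Rightarrow> 3 \<Rightarrow> 3 \<Rightarrow> real^3 \<Rightarrow> real" where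
  "dgmat lam i j k p = deriv (\<lambda>s. gmat lam (p + s *\<^sub>R axis i 1) $ j $ k) 0"

definition christoffel :: "real \<Rightarrow> 3 \<Rightarrow> 3 \<Rightarrow> 3 \<Rightarrow> real^3 \<Rightarrow> real" where
  "christoffel lam k i j p = (1/2) * (\<Sum>l\<in>UNIV.
      matrix_inv (gmat lam p) $ k $ l *
        (dgmat lam i j l p + dgmat lam j i l p - dgmat lam l i j p))"

definition vel :: "(real \<Rightarrow> real^3) \<Rightarrow> real \<Rightarrow> real^3" where
  "vel \<gamma> t = (\<chi> i. deriv (\<lambda>s. \<gamma> s $ i) t)"

definition cov_acc :: "real \<Rightarrow> (real \<Rightarrow> real^3) \<Rightarrow> real \<Rightarrow> real^3" where
  "cov_acc lam \<gamma> t = (\<chi> k. deriv (deriv (\<lambda>s. \<gamma> s $ k)) t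
      + (\<Sum>i\<in>UNIV. \<Sum>j\<in>UNIV. christoffel lam k i j (\<gamma> t) * vel \<gamma> t $ i * vel \<gamma> t $ j))"

definition frame :: "real \<Rightarrow> 3 \<Rightarrow> real^3 \<Rightarrow> real^3" where
  "frame lam i p = (if i = 1 then vector [0, 0, 1]
                    else if i = 2 then vector [0, 1, - (p$1)]
                    else vector [lam, 0, 0])"

definition fcoeff :: "real \<Rightarrow> real^3 \<Rightarrow> real^3 \<Rightarrow> real^3" where
  "fcoeff lam p X = (THE c. X = (\<Sum>i\<in>UNIV. c $ i *\<^sub>R frame lam i p))"

definition wedge :: "real \<Rightarrow> real^3 \<Rightarrow> real^3 \<Rightarrow> real^3 \<Rightarrow> real^3" where
  "wedge lam p X Y = (let a = fcoeff lam p X; b = fcoeff lam p Y in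
      (a$2 * b$3 - a$3 * b$2) *\<^sub>R frame lam 1 p
    + (a$3 * b$1 - a$1 * b$3) *\<^sub>R frame lam 2 p
    + (a$2 * b$1 - a$1 * b$2) *\<^sub>R frame lam 3 p)"

definition V2 :: "real^3" where
  "V2 = vector [0, 1, 0]"

end

theory Submission imports Defs begin

definition ginv :: "real \<Rightarrow> real^3 \<Rightarrow> real^3^3" where
  "ginv lam p = (\<chi> i j.
      if i = 1 \<and> j = 1 then -(lam^2)
      else if i = 2 \<and> j = 2 then 1
      else if (i = 2 \<and> j = 3) \<or> (i = 3 \<and> j = 2) then -(p$1)
      else if i = 3 \<and> j = 3 then 1 + (p$1)^2
      else 0)"

lemma inv_unique:
  fixes A :: "real^3^3"
  assumes "A ** B = mat 1" "B ** A = mat 1"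
  shows "matrix_inv A = B"
proof -
  have ex: "\<exists>A'. A ** A' = mat 1 \<and> A' ** A = mat 1" using assms by blast
  obtain C where C: "A ** C = mat 1" "C ** A = mat 1" "C = matrix_inv A"
    using someI_ex[OF ex] unfolding matrix_inv_def by blast
  have "C = C ** (A ** B)" using assms by (simp add: matrix_mul_rid)
  also have "\<dots> = (C ** A) ** B" by (simp add: matrix_mul_assoc)
  also have "\<dots> = B" using C by (simp add: matrix_mul_lid)
  finally show ?thesis using C by simp
qed

lemma ginv_eq:
  assumes "lam \<noteq> 0"
  shows "matrix_inv (gmat lam p) = ginv lam p"
  apply (rule inv_unique)
  using assms
  by (simp_all add: vec_eq_iff forall_3 matrix_matrix_mult_def sum_3 gmat_def ginv_def mat_def power2_eq_square field_simps)

lemma dgmat_eq: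
  "dgmat lam i j k p = (if i = 1 \<and> j = 2 \<and> k = 2 then 2 * p$1
     else if i = 1 \<and> ((j = 2 \<and> k = 3) \<or> (j = 3 \<and> k = 2)) then 1 else 0)"
proof -
  have e: "(p + s *\<^sub>R axis i 1) $ 1 = p$1 + (if i = 1 then s else 0)" for s
    by (simp add: axis_def)
  show ?thesis
    unfolding dgmat_def gmat_def vec_lambda_beta e
    using exhaust_3[of i] exhaust_3[of j] exhaust_3[of k]
    apply (elim disjE)
    apply (simp_all)
    apply (auto intro!: DERIV_imp_deriv derivative_eq_intros)
    done
qed

lemma fcoeff_eq:
  assumes "lam \<noteq> 0"
  shows "fcoeff lam p X = vector [X$3 + p$1 * X$2, X$2, X$1 / lam]"
  unfolding fcoeff_def
proof (rule the_equality)
  show "X = (\<Sum>i\<in>UNIV. vector [X$3 + p$1 * X$2, X$2, X$1 / lam] $ i *\<^sub>R frame lam i p)"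
    using assms by (simp add: vec_eq_iff forall_3 sum_3 frame_def)
next
  fix c :: "real^3"
  assume "X = (\<Sum>i\<in>UNIV. c $ i *\<^sub>R frame lam i p)"
  then have "X$1 = lam * c$3" "X$2 = c$2" "X$3 = c$1 - p$1 * c$2"
    by (simp_all add: sum_3 frame_def)
  then show "c = vector [X$3 + p$1 * X$2, X$2, X$1 / lam]"
    using assms by (simp add: vec_eq_iff forall_3)
qed

lemma wedge_V2:
  assumes "lam \<noteq> 0"
  shows "wedge lam p V2 Y = vector [lam * Y$3, - (p$1 * Y$1 / lam), Y$1 / lam + (p$1)^2 * Y$1 / lam]"
  using assms
  by (simp add: wedge_def fcoeff_eq V2_def frame_def Let_def vec_eq_iff forall_3 field_simps power2_eq_square)

lemma christoffel_eq:
  assumes "lam \<noteq> 0"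
  shows "christoffel lam k i j p = (1/2) * (\<Sum>l\<in>UNIV.
      ginv lam p $ k $ l * (dgmat lam i j l p + dgmat lam j i l p - dgmat lam l i j p))"
  unfolding christoffel_def ginv_eq[OF assms] ..

lemma cov1:
  assumes "lam \<noteq> 0"
  shows "cov_acc lam \<gamma> t $ 1 = deriv (deriv (\<lambda>s. \<gamma> s $ 1)) t
     + lam^2 * vel \<gamma> t $ 2 * (vel \<gamma> t $ 3 + \<gamma> t $ 1 * vel \<gamma> t $ 2)"
  using assms
  by (simp add: cov_acc_def christoffel_eq sum_3 dgmat_eq ginv_def algebra_simps power2_eq_square)

lemma cov2:
  assumes "lam \<noteq> 0"
  shows "cov_acc lam \<gamma> t $ 2 = deriv (deriv (\<lambda>s. \<gamma> s $ 2)) t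
     + vel \<gamma> t $ 1 * (vel \<gamma> t $ 3 + \<gamma> t $ 1 * vel \<gamma> t $ 2)"
  using assms
  by (simp add: cov_acc_def christoffel_eq sum_3 dgmat_eq ginv_def algebra_simps power2_eq_square)

lemma cov3:
  assumes "lam \<noteq> 0"
  shows "cov_acc lam \<gamma> t $ 3 = deriv (deriv (\<lambda>s. \<gamma> s $ 3)) t
     + vel \<gamma> t $ 1 * vel \<gamma> t $ 2 - \<gamma> t $ 1 * vel \<gamma> t $ 1 * (vel \<gamma> t $ 3 + \<gamma> t $ 1 * vel \<gamma> t $ 2)"
  using assms
  by (simp add: cov_acc_def christoffel_eq sum_3 dgmat_eq ginv_def algebra_simps power2_eq_square)

theorem mainTheorem2:
  fixes lam :: real and \<gamma> :: "real \<Rightarrow> real^3" and I :: "real set"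
  assumes lam_pos: "lam > 0"
    and I_open: "open I" and I_interval: "is_interval I"
    and smooth: "\<And>i n t. t \<in> I \<Longrightarrow> (deriv ^^ n) (\<lambda>s. \<gamma> s $ i) differentiable (at t)"
    and magnetic: "\<And>t. t \<in> I \<Longrightarrow> cov_acc lam \<gamma> t = wedge lam (\<gamma> t) V2 (vel \<gamma> t)"
  defines "x \<equiv> (\<lambda>s. \<gamma> s $ 1)" and "y \<equiv> (\<lambda>s. \<gamma> s $ 2)" and "z \<equiv> (\<lambda>s. \<gamma> s $ 3)"
  shows "\<forall>t\<in>I.
      deriv (deriv y) t + deriv x t * (deriv z t + x t * deriv y t) = - (x t * deriv x t) / lam
    \<and> (lam * deriv y t - 1) * (deriv z t + x t * deriv y t) = - (x t * deriv y t) - deriv (deriv x) t / lam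
    \<and> deriv (\<lambda>s. deriv z s + x s * deriv y s) t = deriv x t / lam"
proof
  fix t assume t: "t \<in> I"
  have l: "lam \<noteq> 0" using lam_pos by simp
  have v: "vel \<gamma> t $ 1 = deriv x t" "vel \<gamma> t $ 2 = deriv y t" "vel \<gamma> t $ 3 = deriv z t"
    by (simp_all add: vel_def x_def y_def z_def)
  have g1: "\<gamma> t $ 1 = x t" by (simp add: x_def)
  have M: "cov_acc lam \<gamma> t $ k = wedge lam (\<gamma> t) V2 (vel \<gamma> t) $ k" for k
    using magnetic[OF t] by simp
  note W = wedge_V2[OF l]
  have e1: "deriv (deriv x) t + lam^2 * deriv y t * (deriv z t + x t * deriv y t) = lam * deriv z t"
    using M[of 1] unfolding cov1[OF l] W v g1 by (simp add: x_def)
  have e2: "deriv (deriv y) t + deriv x t * (deriv z t + x t * deriv y t) = - (x t * deriv x t / lam)"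
    using M[of 2] unfolding cov2[OF l] W v g1 by (simp add: y_def)
  have e3: "deriv (deriv z) t + deriv x t * deriv y t - x t * deriv x t * (deriv z t + x t * deriv y t)
      = deriv x t / lam + (x t)^2 * deriv x t / lam"
    using M[of 3] unfolding cov3[OF l] W v g1 by (simp add: z_def)
  have dx: "x differentiable (at t)" using smooth[OF t, where i=1 and n=0] by (simp add: x_def)
  have dy: "deriv y differentiable (at t)" using smooth[OF t, where i=2 and n=1] by (simp add: y_def)
  have dz: "deriv z differentiable (at t)" using smooth[OF t, where i=3 and n=1] by (simp add: z_def)
  have "((\<lambda>s. deriv z s + x s * deriv y s) has_real_derivative
      deriv (deriv z) t + (deriv x t * deriv y t + x t * deriv (deriv y) t)) (at t)"
  proof -
    have a: "(x has_real_derivative deriv x t) (at t)" using dx DERIV_deriv_iff_real_differentiable by blast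
    have b: "(deriv y has_real_derivative deriv (deriv y) t) (at t)" using dy DERIV_deriv_iff_real_differentiable by blast
    have c: "(deriv z has_real_derivative deriv (deriv z) t) (at t)" using dz DERIV_deriv_iff_real_differentiable by blast
    show ?thesis using DERIV_add[OF c DERIV_mult[OF a b]] by (simp add: algebra_simps)
  qed
  then have D: "deriv (\<lambda>s. deriv z s + x s * deriv y s) t
      = deriv (deriv z) t + (deriv x t * deriv y t + x t * deriv (deriv y) t)"
    by (rule DERIV_imp_deriv)
  show "deriv (deriv y) t + deriv x t * (deriv z t + x t * deriv y t) = - (x t * deriv x t) / lam
    \<and> (lam * deriv y t - 1) * (deriv z t + x t * deriv y t) = - (x t * deriv y t) - deriv (deriv x) t / lam
    \<and> deriv (\<lambda>s. deriv z s + x s * deriv y s) t = deriv x t / lam"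
  proof (intro conjI)
    show "deriv (deriv y) t + deriv x t * (deriv z t + x t * deriv y t) = - (x t * deriv x t) / lam"
      using e2 by simp
    show "(lam * deriv y t - 1) * (deriv z t + x t * deriv y t) = - (x t * deriv y t) - deriv (deriv x) t / lam"
      using e1 l by (simp add: field_simps power2_eq_square)
    have Y: "deriv (deriv y) t = - (x t * deriv x t / lam) - deriv x t * (deriv z t + x t * deriv y t)"
      using e2 by simp
    show "deriv (\<lambda>s. deriv z s + x s * deriv y s) t = deriv x t / lam"
      unfolding D Y using e3 l by (simp add: field_simps power2_eq_square)
  qed
qed

end
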